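(* $NPO(3)=6$.
   Context: All graphs are finite, simple and undirected; $A(G)$ denotes the adjacency matrix of $G$. Eigenvalues are counted with multiplicity. For a positive integer $k$, $NPO(k)$ is the smallest integer $n$ such that the adjacency matrix of every graph with at least $n$ vertices has at least $k$ nonpositive eigenvalues. *)

theory Defs
  imports "Jordan_Normal_Form.Char_Poly"
begin

text \<open>A finite simple graph on the vertex set {0..<n} is given by a symmetric,
irreflexive adjacency relation E (only its values on {0..<n} matter).\<close>
definition simple_graph :: "nat \<Rightarrow> (nat \<Rightarrow> nat \<Rightarrow> bool) \<Rightarrow> bool" where
  "simple_graph n E \<longleftrightarrow> (\<forall>i<n. \<forall>j<n. E i j = E j i) \<and> (\<forall>i<n. \<not> E i i)"

definition adj_matrix :: "nat \<Rightarrow> (nat \<Rightarrow> nat \<Rightarrow> bool) \<Rightarrow> real mat" where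
  "adj_matrix n E = mat n n (\<lambda>(i, j). if E i j then 1 else 0)"

definition num_nonpos_eigenvalues :: "real mat \<Rightarrow> nat" where
  "num_nonpos_eigenvalues A =
     (\<Sum>x \<in> {x. x \<le> 0 \<and> poly (char_poly A) x = 0}. order x (char_poly A))"

definition NPO :: "nat \<Rightarrow> nat" where
  "NPO k = (LEAST n. \<forall>m \<ge> n. \<forall>E. simple_graph m E \<longrightarrow>
                         k \<le> num_nonpos_eigenvalues (adj_matrix m E))"

end

theory Submission
  imports Defs
begin

lemma mv_idx:
  fixes A :: "'a::comm_ring_1 mat"
  assumes "A \<in> carrier_mat n n" "v \<in> carrier_vec n" "i < n"
  shows "(A *\<^sub>v v) $ i = (\<Sum>j\<in>{0..<n}. A $$ (i,j) * v $ j)"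
  using assms by (auto simp: scalar_prod_def intro!: sum.cong)

lemma sp_idx:
  assumes "w \<in> carrier_vec n"
  shows "v \<bullet> w = (\<Sum>j\<in>{0..<n}. v $ j * w $ j)"
  using assms by (auto simp: scalar_prod_def)

lemma sym_quad:
  fixes A :: "real mat"
  assumes A: "A \<in> carrier_mat n n" and sym: "\<forall>i<n. \<forall>j<n. A$$(i,j) = A$$(j,i)"
    and x: "x \<in> carrier_vec n" and y: "y \<in> carrier_vec n"
  shows "x \<bullet> (A *\<^sub>v y) = y \<bullet> (A *\<^sub>v x)"
proof -
  have "x \<bullet> (A *\<^sub>v y) = (\<Sum>i\<in>{0..<n}. x $ i * (\<Sum>j\<in>{0..<n}. A $$ (i,j) * y $ j))"
    using A x y by (simp add: sp_idx[of _ n] mv_idx)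
  also have "\<dots> = (\<Sum>i\<in>{0..<n}. \<Sum>j\<in>{0..<n}. x $ i * A $$ (i,j) * y $ j)"
    by (simp add: sum_distrib_left mult.assoc)
  also have "\<dots> = (\<Sum>j\<in>{0..<n}. \<Sum>i\<in>{0..<n}. x $ i * A $$ (i,j) * y $ j)"
    by (rule sum.swap)
  also have "\<dots> = (\<Sum>j\<in>{0..<n}. y $ j * (\<Sum>i\<in>{0..<n}. A $$ (j,i) * x $ i))"
    using sym by (auto simp: sum_distrib_left intro!: sum.cong)
  also have "\<dots> = y \<bullet> (A *\<^sub>v x)"
    using A x y by (simp add: sp_idx[of _ n] mv_idx)
  finally show ?thesis .
qed

lemma sq_pos:
  fixes x :: "real vec"
  assumes "x \<in> carrier_vec n" "x \<noteq> 0\<^sub>v n"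
  shows "x \<bullet> x > 0"
proof -
  from assms obtain k where k: "k < n" "x $ k \<noteq> 0" by (metis eq_vecI carrier_vecD index_zero_vec)
  have "x \<bullet> x = (\<Sum>j\<in>{0..<n}. x $ j * x $ j)" using assms by (simp add: sp_idx)
  also have "\<dots> > 0"
  proof (rule sum_pos2[of _ k])
    show "x $ k * x $ k > 0" by (metis k(2) not_real_square_gt_zero)
  qed (use k in auto)
  finally show ?thesis .
qed

lemma sq_nonneg:
  fixes x :: "real vec"
  assumes "x \<in> carrier_vec n"
  shows "x \<bullet> x \<ge> 0"
  using assms by (simp add: sp_idx sum_nonneg)

lemma householder:
  fixes u :: "real vec"
  assumes u: "u \<in> carrier_vec n" and uu: "u \<bullet> u = 1" and n: "0 < n"
  shows "\<exists>H. H \<in> carrier_mat n n \<and> (\<forall>i<n. \<forall>j<n. H$$(i,j) = H$$(j,i)) \<and> H * H = 1\<^sub>m n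
     \<and> H *\<^sub>v unit_vec n 0 = u"
proof -
  define w where "w = (\<lambda>k. u $ k - (if k = 0 then 1 else 0))"
  define c where "c = 1 / (1 - u $ 0)"
  define H where "H = mat n n (\<lambda>(i,j). (if i = j then 1 else 0) - c * w i * w j)"
  have H: "H \<in> carrier_mat n n" by (simp add: H_def)
  have S: "(\<Sum>k\<in>{0..<n}. w k * w k) = 2 - 2 * u $ 0"
  proof -
    have "(\<Sum>k\<in>{0..<n}. w k * w k) = (\<Sum>k\<in>{0..<n}. u $ k * u $ k - 2 * (if k = 0 then u $ k else 0) + (if k = 0 then 1 else 0))"
      by (rule sum.cong) (auto simp: w_def algebra_simps)
    also have "\<dots> = (\<Sum>k\<in>{0..<n}. u $ k * u $ k) - 2 * u $ 0 + 1"
      using n by (simp add: sum.distrib sum_subtractf sum_distrib_left[symmetric])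
    also have "(\<Sum>k\<in>{0..<n}. u $ k * u $ k) = 1" using uu u by (simp add: sp_idx)
    finally show ?thesis by simp
  qed
  have cS: "c * c * (2 - 2 * u $ 0) = 2 * c"
  proof (cases "u $ 0 = 1")
    case False
    hence "c * (1 - u $ 0) = 1" by (simp add: c_def)
    moreover have "c * c * (2 - 2 * u $ 0) = 2 * c * (c * (1 - u $ 0))" by (simp add: algebra_simps)
    ultimately show ?thesis by simp
  qed (simp add: c_def)
  have HH: "H * H = 1\<^sub>m n"
  proof (rule eq_matI)
    fix i j assume "i < dim_row (1\<^sub>m n :: real mat)" "j < dim_col (1\<^sub>m n :: real mat)"
    hence i: "i < n" and j: "j < n" by auto
    have "(H * H) $$ (i,j) = (\<Sum>k\<in>{0..<n}. H $$ (i,k) * H $$ (k,j))"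
      using H i j by (simp add: scalar_prod_def)
    also have "\<dots> = (\<Sum>k\<in>{0..<n}. (if i = k then 1 else 0) * (if k = j then 1 else 0)
        - (if i = k then c * w k * w j else 0) - (if k = j then c * w i * w k else 0)
        + c * c * w i * w j * (w k * w k))"
      using i j by (intro sum.cong) (auto simp: H_def algebra_simps)
    also have "\<dots> = (if i = j then 1 else 0) - c * w i * w j - c * w i * w j
        + c * c * w i * w j * (\<Sum>k\<in>{0..<n}. w k * w k)"
      using i j by (simp add: sum.distrib sum_subtractf sum_distrib_left[symmetric] if_distrib[where f="\<lambda>x. x * _"] cong: if_cong)
    also have "\<dots> = (if i = j then 1 else 0) - 2 * c * (w i * w j) + (c * c * (2 - 2 * u $ 0)) * (w i * w j)"
      unfolding S by (simp add: algebra_simps)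
    also have "\<dots> = (if i = j then 1 else 0)"
      unfolding cS by simp
    finally show "(H * H) $$ (i,j) = 1\<^sub>m n $$ (i,j)" using i j by simp
  qed (use H in auto)
  have He: "H *\<^sub>v unit_vec n 0 = u"
  proof (rule eq_vecI)
    fix i assume "i < dim_vec u"
    hence i: "i < n" using u by simp
    have "(H *\<^sub>v unit_vec n 0) $ i = H $$ (i, 0)"
      using H i n by (simp add: mv_idx[OF H] if_distrib[where f="\<lambda>x. _ * x"] cong: if_cong)
    also have "\<dots> = u $ i"
    proof (cases "u $ 0 = 1")
      case True
      hence "(\<Sum>k\<in>{0..<n}. w k * w k) = 0" using S by simp
      hence "w i * w i = 0" using i by (subst (asm) sum_nonneg_eq_0_iff) auto
      thus ?thesis using i True by (auto simp: H_def c_def w_def split: if_splits)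
    next
      case False
      thus ?thesis using i n by (auto simp: H_def c_def w_def field_simps)
    qed
    finally show "(H *\<^sub>v unit_vec n 0) $ i = u $ i" .
  qed (use H u in auto)
  show ?thesis using H HH He by (intro exI[of _ H]) (auto simp: H_def)
qed

lemma real_eigen:
  fixes A :: "real mat"
  assumes A: "A \<in> carrier_mat n n" and n: "n > 0" and sym: "\<forall>i<n. \<forall>j<n. A$$(i,j) = A$$(j,i)"
  shows "\<exists>l v. v \<in> carrier_vec n \<and> v \<noteq> 0\<^sub>v n \<and> A *\<^sub>v v = l \<cdot>\<^sub>v v"
proof -
  define Ac where "Ac = map_mat complex_of_real A"
  have Ac: "Ac \<in> carrier_mat n n" using A by (simp add: Ac_def)
  obtain as where cp: "char_poly Ac = (\<Prod>a\<leftarrow>as. [:- a, 1:])" and len: "length as = n"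
    using char_poly_factorized[OF Ac] by blast
  define mu where "mu = as ! 0"
  have "mu \<in> set as" using len n by (simp add: mu_def)
  hence "poly (char_poly Ac) mu = 0" unfolding cp poly_prod_list
    by (simp add: prod_list_zero_iff)
  hence "eigenvalue Ac mu" using eigenvalue_root_char_poly[OF Ac] by simp
  then obtain vc where ev: "eigenvector Ac vc mu" unfolding eigenvalue_def by blast
  hence vc: "vc \<in> carrier_vec n" "vc \<noteq> 0\<^sub>v n" "Ac *\<^sub>v vc = mu \<cdot>\<^sub>v vc"
    using Ac unfolding eigenvector_def by auto
  define x where "x = vec n (\<lambda>j. Re (vc $ j))"
  define y where "y = vec n (\<lambda>j. Im (vc $ j))"
  define a where "a = Re mu"
  define b where "b = Im mu"
  have x: "x \<in> carrier_vec n" and y: "y \<in> carrier_vec n" by (auto simp: x_def y_def)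
  have comp: "(\<Sum>j\<in>{0..<n}. complex_of_real (A $$ (k,j)) * vc $ j) = mu * vc $ k" if k: "k < n" for k
  proof -
    have "(Ac *\<^sub>v vc) $ k = (mu \<cdot>\<^sub>v vc) $ k" using vc by simp
    also have "(Ac *\<^sub>v vc) $ k = (\<Sum>j\<in>{0..<n}. Ac $$ (k,j) * vc $ j)" by (rule mv_idx[OF Ac vc(1) k])
    also have "\<dots> = (\<Sum>j\<in>{0..<n}. complex_of_real (A $$ (k,j)) * vc $ j)"
      using A k by (auto simp: Ac_def intro!: sum.cong)
    finally show ?thesis using k vc by simp
  qed
  have Ax: "A *\<^sub>v x = a \<cdot>\<^sub>v x - b \<cdot>\<^sub>v y"
  proof (rule eq_vecI)
    fix k assume "k < dim_vec (a \<cdot>\<^sub>v x - b \<cdot>\<^sub>v y)"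
    hence k: "k < n" using y by simp
    have "Re (\<Sum>j\<in>{0..<n}. complex_of_real (A $$ (k,j)) * vc $ j) = Re (mu * vc $ k)"
      using comp[OF k] by simp
    hence "(\<Sum>j\<in>{0..<n}. A $$ (k,j) * Re (vc $ j)) = a * Re (vc $ k) - b * Im (vc $ k)"
      by (simp add: Re_sum a_def b_def)
    moreover have "(A *\<^sub>v x) $ k = (\<Sum>j\<in>{0..<n}. A $$ (k,j) * Re (vc $ j))"
      using mv_idx[OF A x k] by (simp add: x_def)
    ultimately show "(A *\<^sub>v x) $ k = (a \<cdot>\<^sub>v x - b \<cdot>\<^sub>v y) $ k"
      using k x y by (simp add: x_def y_def)
  qed (use A x y in auto)
  have Ay: "A *\<^sub>v y = b \<cdot>\<^sub>v x + a \<cdot>\<^sub>v y"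
  proof (rule eq_vecI)
    fix k assume "k < dim_vec (b \<cdot>\<^sub>v x + a \<cdot>\<^sub>v y)"
    hence k: "k < n" using y by simp
    have "Im (\<Sum>j\<in>{0..<n}. complex_of_real (A $$ (k,j)) * vc $ j) = Im (mu * vc $ k)"
      using comp[OF k] by simp
    hence "(\<Sum>j\<in>{0..<n}. A $$ (k,j) * Im (vc $ j)) = b * Re (vc $ k) + a * Im (vc $ k)"
      by (simp add: Im_sum a_def b_def)
    moreover have "(A *\<^sub>v y) $ k = (\<Sum>j\<in>{0..<n}. A $$ (k,j) * Im (vc $ j))"
      using mv_idx[OF A y k] by (simp add: y_def)
    ultimately show "(A *\<^sub>v y) $ k = (b \<cdot>\<^sub>v x + a \<cdot>\<^sub>v y) $ k"
      using k x y by (simp add: x_def y_def)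
  qed (use A x y in auto)
  have "x \<bullet> (A *\<^sub>v y) = y \<bullet> (A *\<^sub>v x)" by (rule sym_quad[OF A sym x y])
  hence "b * (x \<bullet> x) + a * (x \<bullet> y) = a * (y \<bullet> x) - b * (y \<bullet> y)"
    unfolding Ax Ay using x y
    by (simp add: scalar_prod_add_distrib scalar_prod_minus_distrib)
  moreover have "x \<bullet> y = y \<bullet> x" using x y comm_scalar_prod by blast
  ultimately have b0: "b * (x \<bullet> x + y \<bullet> y) = 0" by (simp add: algebra_simps)
  have "x \<noteq> 0\<^sub>v n \<or> y \<noteq> 0\<^sub>v n"
  proof (rule ccontr)
    assume "\<not> ?thesis"
    hence "x = 0\<^sub>v n" "y = 0\<^sub>v n" by auto
    hence xy0: "x $ i = 0" "y $ i = 0" if "i < n" for i using that by auto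
    have "vc = 0\<^sub>v n"
    proof (rule eq_vecI)
      fix i assume "i < dim_vec (0\<^sub>v n :: complex vec)"
      hence i: "i < n" by simp
      show "vc $ i = 0\<^sub>v n $ i" using xy0[OF i] i by (simp add: x_def y_def complex_eq_iff)
    qed (use vc in simp)
    with vc show False by simp
  qed
  hence pos: "x \<bullet> x + y \<bullet> y > 0"
    using sq_pos[OF x] sq_pos[OF y] sq_nonneg[OF x] sq_nonneg[OF y] by fastforce
  have "b = 0" using b0 pos by simp
  hence "A *\<^sub>v x = a \<cdot>\<^sub>v x" "A *\<^sub>v y = a \<cdot>\<^sub>v y" using Ax Ay x y by auto
  thus ?thesis using \<open>x \<noteq> 0\<^sub>v n \<or> y \<noteq> 0\<^sub>v n\<close> x y by blast
qed

lemma sum_shift: "(\<Sum>j\<in>{0..<Suc n}. f j) = f 0 + (\<Sum>j\<in>{0..<n}. f (Suc j))"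
  by (subst sum.atLeast0_lessThan_Suc_shift) simp

lemma sym_transpose:
  assumes "A \<in> carrier_mat n n" "\<forall>i<n. \<forall>j<n. A$$(i,j) = A$$(j,i)"
  shows "transpose_mat A = A"
  using assms by (intro eq_matI) auto

definition ext :: "nat \<Rightarrow> real vec \<Rightarrow> real vec" where
  "ext n x = vec (Suc n) (\<lambda>k. if k = 0 then 0 else x $ (k - 1))"

lemma ext_carrier[simp]: "ext n x \<in> carrier_vec (Suc n)"
  by (simp add: ext_def)

lemma ext_sp:
  assumes "x \<in> carrier_vec n" "y \<in> carrier_vec n"
  shows "ext n x \<bullet> ext n y = x \<bullet> y"
  using assms by (simp add: sp_idx[of _ "Suc n"] sp_idx[of _ n] sum_shift ext_def del: sum.atLeast0_lessThan_Suc sum.op_ivl_Suc)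

lemma ext_e0:
  shows "unit_vec (Suc n) 0 \<bullet> ext n y = 0"
  by (simp add: sp_idx[of _ "Suc n"] sum_shift ext_def del: sum.atLeast0_lessThan_Suc sum.op_ivl_Suc)

lemma ext_mult:
  fixes B :: "real mat"
  assumes B: "B \<in> carrier_mat (Suc n) (Suc n)" and B0: "\<forall>j<Suc n. j \<noteq> 0 \<longrightarrow> B $$ (0, j) = 0"
    and x: "x \<in> carrier_vec n"
  shows "B *\<^sub>v ext n x = ext n (mat n n (\<lambda>(i,j). B $$ (Suc i, Suc j)) *\<^sub>v x)"
proof (rule eq_vecI)
  fix k assume "k < dim_vec (ext n (mat n n (\<lambda>(i,j). B $$ (Suc i, Suc j)) *\<^sub>v x))"
  hence k: "k < Suc n" by (simp add: ext_def)
  have "(B *\<^sub>v ext n x) $ k = (\<Sum>j\<in>{0..<Suc n}. B $$ (k,j) * ext n x $ j)"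
    by (rule mv_idx[OF B ext_carrier k])
  also have "\<dots> = B $$ (k,0) * ext n x $ 0 + (\<Sum>j\<in>{0..<n}. B $$ (k, Suc j) * ext n x $ Suc j)"
    by (rule sum_shift)
  also have "\<dots> = (\<Sum>j\<in>{0..<n}. B $$ (k, Suc j) * x $ j)"
    by (auto simp: ext_def intro!: sum.cong)
  also have "\<dots> = ext n (mat n n (\<lambda>(i,j). B $$ (Suc i, Suc j)) *\<^sub>v x) $ k"
  proof (cases k)
    case 0
    thus ?thesis using B0 by (simp add: ext_def)
  next
    case (Suc k')
    hence "k' < n" using k by simp
    thus ?thesis using Suc x by (auto simp: ext_def sp_idx[OF x] intro!: sum.cong)
  qed
  finally show "(B *\<^sub>v ext n x) $ k = ext n (mat n n (\<lambda>(i,j). B $$ (Suc i, Suc j)) *\<^sub>v x) $ k" .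
qed (use B in \<open>auto simp: ext_def\<close>)

lemma ext_smult: "x \<in> carrier_vec n \<Longrightarrow> ext n (a \<cdot>\<^sub>v x) = a \<cdot>\<^sub>v ext n x"
  by (intro eq_vecI) (auto simp: ext_def)

lemma orth_pres:
  fixes H :: "real mat"
  assumes H: "H \<in> carrier_mat n n" and Ht: "transpose_mat H = H" and HH: "H * H = 1\<^sub>m n"
    and x: "x \<in> carrier_vec n" and y: "y \<in> carrier_vec n"
  shows "(H *\<^sub>v x) \<bullet> (H *\<^sub>v y) = x \<bullet> y"
proof -
  have "(transpose_mat H *\<^sub>v (H *\<^sub>v x)) \<bullet> y = (H *\<^sub>v x) \<bullet> (H *\<^sub>v y)"
    by (rule transpose_vec_mult_scalar[OF H y]) (use H x in simp)
  moreover have "transpose_mat H *\<^sub>v (H *\<^sub>v x) = x"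
    unfolding Ht using H x HH by (simp add: assoc_mult_mat_vec[symmetric])
  ultimately show ?thesis by simp
qed

lemma spectral:
  fixes A :: "real mat"
  assumes "A \<in> carrier_mat n n" "\<forall>i<n. \<forall>j<n. A$$(i,j) = A$$(j,i)"
  shows "\<exists>d u. (\<forall>i<n. u i \<in> carrier_vec n \<and> A *\<^sub>v u i = d i \<cdot>\<^sub>v u i)
     \<and> (\<forall>i<n. \<forall>j<n. u i \<bullet> u j = (if i = j then 1 else 0))"
  using assms
proof (induction n arbitrary: A)
  case 0
  then show ?case by auto
next
  case (Suc n)
  note A = Suc.prems(1) and sym = Suc.prems(2)
  obtain l v where v: "v \<in> carrier_vec (Suc n)" "v \<noteq> 0\<^sub>v (Suc n)" "A *\<^sub>v v = l \<cdot>\<^sub>v v"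
    using real_eigen[OF A _ sym] by blast
  define s where "s = v \<bullet> v"
  have s: "s > 0" using sq_pos[OF v(1,2)] by (simp add: s_def)
  define uu where "uu = (1 / sqrt s) \<cdot>\<^sub>v v"
  have uu: "uu \<in> carrier_vec (Suc n)" using v by (simp add: uu_def)
  have uuu: "uu \<bullet> uu = 1" using v s
    by (simp add: uu_def s_def[symmetric])
  have Auu: "A *\<^sub>v uu = l \<cdot>\<^sub>v uu"
    using v A by (simp add: uu_def mult_mat_vec[OF A] smult_smult_assoc mult.commute)
  obtain H where H: "H \<in> carrier_mat (Suc n) (Suc n)" and Hs: "\<forall>i<Suc n. \<forall>j<Suc n. H$$(i,j) = H$$(j,i)"
    and HH: "H * H = 1\<^sub>m (Suc n)" and He: "H *\<^sub>v unit_vec (Suc n) 0 = uu"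
    using householder[OF uu uuu] by blast
  have Ht: "transpose_mat H = H" by (rule sym_transpose[OF H Hs])
  have At: "transpose_mat A = A" by (rule sym_transpose[OF A sym])
  define B where "B = H * A * H"
  have B: "B \<in> carrier_mat (Suc n) (Suc n)" using H A by (simp add: B_def)
  have Bt: "transpose_mat B = B"
  proof -
    have "transpose_mat (H * A * H) = transpose_mat H * transpose_mat (H * A)"
      using H A by (intro transpose_mult[of _ "Suc n" "Suc n"]) auto
    also have "transpose_mat (H * A) = transpose_mat A * transpose_mat H"
      using H A by (intro transpose_mult[of _ "Suc n" "Suc n"]) auto
    finally show ?thesis using H A by (simp add: B_def Ht At)
  qed
  have Bsym: "\<forall>i<Suc n. \<forall>j<Suc n. B$$(i,j) = B$$(j,i)"
    using Bt B by (metis carrier_matD index_transpose_mat(1))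
  have HBH: "H * B * H = A"
  proof -
    have "H * B = H * ((H * A) * H)" by (simp add: B_def)
    also have "\<dots> = (H * (H * A)) * H" using H A by (metis assoc_mult_mat mult_carrier_mat)
    also have "H * (H * A) = (H * H) * A" using H A by (simp add: assoc_mult_mat[of _ "Suc n" "Suc n"])
    finally have "H * B = A * H" using HH A by simp
    hence "H * B * H = A * H * H" by simp
    also have "\<dots> = A * (H * H)" using H A by (simp add: assoc_mult_mat[of _ "Suc n" "Suc n"])
    finally show ?thesis using HH A by simp
  qed
  define e0 :: "real vec" where "e0 = unit_vec (Suc n) 0"
  have e0: "e0 \<in> carrier_vec (Suc n)" by (simp add: e0_def)
  have Be0: "B *\<^sub>v e0 = l \<cdot>\<^sub>v e0"
  proof -
    have "B *\<^sub>v e0 = (H * A) *\<^sub>v (H *\<^sub>v e0)"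
      unfolding B_def using H A e0 by (metis assoc_mult_mat_vec mult_carrier_mat)
    also have "\<dots> = H *\<^sub>v (A *\<^sub>v (H *\<^sub>v e0))"
      using H A e0 by (metis assoc_mult_mat_vec mult_mat_vec_carrier)
    also have "\<dots> = l \<cdot>\<^sub>v (H *\<^sub>v uu)" using He Auu H uu by (simp add: e0_def mult_mat_vec[OF H])
    also have "H *\<^sub>v uu = e0" using He[symmetric] H HH e0 by (simp add: e0_def assoc_mult_mat_vec[symmetric])
    finally show ?thesis .
  qed
  have Bcol: "B $$ (i, 0) = (if i = 0 then l else 0)" if "i < Suc n" for i
  proof -
    have "(B *\<^sub>v e0) $ i = B $$ (i, 0)" using B that by (simp add: e0_def)
    thus ?thesis using Be0 that by (auto simp: e0_def split: if_splits)
  qed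
  have B0: "\<forall>j<Suc n. j \<noteq> 0 \<longrightarrow> B $$ (0, j) = 0" using Bcol Bsym by auto
  define B3 where "B3 = mat n n (\<lambda>(i,j). B $$ (Suc i, Suc j))"
  have B3: "B3 \<in> carrier_mat n n" by (simp add: B3_def)
  have B3sym: "\<forall>i<n. \<forall>j<n. B3$$(i,j) = B3$$(j,i)" using Bsym by (simp add: B3_def)
  obtain d3 u3 where u3: "\<forall>i<n. u3 i \<in> carrier_vec n \<and> B3 *\<^sub>v u3 i = d3 i \<cdot>\<^sub>v u3 i"
    and o3: "\<forall>i<n. \<forall>j<n. u3 i \<bullet> u3 j = (if i = j then 1 else 0)"
    using Suc.IH[OF B3 B3sym] by blast
  define u2 where "u2 = (\<lambda>i. if i = 0 then e0 else ext n (u3 (i - 1)))"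
  define d2 where "d2 = (\<lambda>i. if i = 0 then l else d3 (i - 1))"
  have u2c: "u2 i \<in> carrier_vec (Suc n)" for i by (simp add: u2_def e0)
  have Bu2: "B *\<^sub>v u2 i = d2 i \<cdot>\<^sub>v u2 i" if i: "i < Suc n" for i
  proof (cases i)
    case 0
    thus ?thesis using Be0 by (simp add: u2_def d2_def)
  next
    case (Suc i')
    hence i': "i' < n" using i by simp
    have "B *\<^sub>v u2 i = ext n (B3 *\<^sub>v u3 i')"
      using ext_mult[OF B B0, of "u3 i'"] u3 i' Suc by (simp add: u2_def B3_def)
    also have "\<dots> = d2 i \<cdot>\<^sub>v u2 i" using u3 i' Suc by (simp add: ext_smult u2_def d2_def)
    finally show ?thesis .
  qed
  have o2: "u2 i \<bullet> u2 j = (if i = j then 1 else 0)" if "i < Suc n" "j < Suc n" for i j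
  proof (cases i; cases j)
    fix i' j' assume "i = Suc i'" "j = Suc j'"
    thus ?thesis using that o3 u3 by (simp add: u2_def ext_sp)
  next
    fix j' assume "i = 0" "j = Suc j'"
    thus ?thesis by (simp add: u2_def e0_def ext_e0)
  next
    fix i' assume "i = Suc i'" "j = 0"
    thus ?thesis using comm_scalar_prod[OF e0 ext_carrier[of n "u3 i'"]]
      by (simp add: u2_def e0_def ext_e0)
  qed (simp add: u2_def e0_def)
  define u where "u = (\<lambda>i. H *\<^sub>v u2 i)"
  show ?case
  proof (intro exI[of _ d2] exI[of _ u] conjI allI impI)
    fix i assume i: "i < Suc n"
    show "u i \<in> carrier_vec (Suc n)" using H u2c[of i] by (simp add: u_def)
    have ui: "u i \<in> carrier_vec (Suc n)" using H u2c[of i] by (simp add: u_def)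
    have "A *\<^sub>v u i = (H * B * H) *\<^sub>v u i" using HBH by simp
    also have "\<dots> = (H * B) *\<^sub>v (H *\<^sub>v u i)"
      using H B ui by (metis assoc_mult_mat_vec mult_carrier_mat)
    also have "\<dots> = H *\<^sub>v (B *\<^sub>v (H *\<^sub>v u i))"
      using H B ui by (metis assoc_mult_mat_vec mult_mat_vec_carrier)
    finally have "A *\<^sub>v u i = H *\<^sub>v (B *\<^sub>v (H *\<^sub>v (H *\<^sub>v u2 i)))" by (simp add: u_def)
    also have "H *\<^sub>v (H *\<^sub>v u2 i) = u2 i"
      using H HH u2c[of i] by (simp add: assoc_mult_mat_vec[symmetric])
    finally show "A *\<^sub>v u i = d2 i \<cdot>\<^sub>v u i"
      using Bu2[OF i] H u2c[of i] by (simp add: u_def mult_mat_vec[OF H])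
  next
    fix i j assume "i < Suc n" "j < Suc n"
    thus "u i \<bullet> u j = (if i = j then 1 else 0)"
      using orth_pres[OF H Ht HH u2c u2c] o2 by (simp add: u_def)
  qed
qed

lemma order_lin: "order x [:-a, 1::real:] = (if x = a then 1 else 0)"
proof (cases "x = a")
  case True
  thus ?thesis using order_power_n_n[of a 1] by simp
next
  case False
  hence "poly [:-a, 1:] x \<noteq> 0" by simp
  thus ?thesis using False by (simp add: order_0I)
qed

lemma prod_lin_nz: "(\<Prod>a\<leftarrow>ds. [:-a, 1::real:]) \<noteq> 0"
  by (subst prod_list_zero_iff) auto

lemma order_prod_lin: "order x (\<Prod>a\<leftarrow>ds. [:-a, 1::real:]) = count_list ds x"
proof (induction ds)
  case Nil
  then show ?case by simp
next
  case (Cons a ds)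
  have eq: "(\<Prod>a\<leftarrow>a # ds. [:-a, 1::real:]) = [:-a, 1:] * (\<Prod>a\<leftarrow>ds. [:-a, 1::real:])" by simp
  have "order x (\<Prod>a\<leftarrow>a # ds. [:-a, 1::real:]) = order x [:-a, 1:] + order x (\<Prod>a\<leftarrow>ds. [:-a, 1::real:])"
    unfolding eq by (rule order_mult) (use prod_lin_nz[of "a # ds"] eq in simp)
  then show ?case using Cons by (simp add: order_lin)
qed

lemma sum_count:
  assumes "finite R"
  shows "(\<Sum>x\<in>R. count_list ds x) = length (filter (\<lambda>a. a \<in> R) ds)"
proof (induction ds)
  case Nil
  then show ?case by simp
next
  case (Cons a ds)
  have "(\<Sum>x\<in>R. count_list (a # ds) x) = (\<Sum>x\<in>R. count_list ds x) + (\<Sum>x\<in>R. if a = x then 1 else 0)"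
    by (auto simp: sum.distrib[symmetric] intro!: sum.cong)
  also have "(\<Sum>x\<in>R. if a = x then 1 else 0) = (if a \<in> R then 1 else 0)"
    using assms by simp
  finally show ?case using Cons by simp
qed

lemma num_nonpos_prod:
  assumes cp: "char_poly A = (\<Prod>a\<leftarrow>ds. [:-a, 1::real:])"
  shows "num_nonpos_eigenvalues A = length (filter (\<lambda>a. a \<le> 0) ds)"
proof -
  define p where "p = (\<Prod>a\<leftarrow>ds. [:-a, 1::real:])"
  have root: "poly p x = 0 \<longleftrightarrow> x \<in> set ds" for x
    by (force simp: p_def poly_prod_list prod_list_zero_iff)
  define R where "R = {x. x \<le> 0 \<and> poly p x = 0}"
  have R: "R = {x \<in> set ds. x \<le> 0}" using root by (auto simp: R_def)
  have fin: "finite R" unfolding R by simp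
  have "num_nonpos_eigenvalues A = (\<Sum>x\<in>R. count_list ds x)"
    unfolding num_nonpos_eigenvalues_def cp p_def[symmetric] R_def
    by (simp add: p_def order_prod_lin)
  also have "\<dots> = length (filter (\<lambda>a. a \<in> R) ds)" by (rule sum_count[OF fin])
  also have "filter (\<lambda>a. a \<in> R) ds = filter (\<lambda>a. a \<le> 0) ds"
    unfolding R by (rule filter_cong) auto
  finally show ?thesis .
qed

lemma spec_facts:
  fixes A :: "real mat"
  assumes A: "A \<in> carrier_mat n n" and sym: "\<forall>i<n. \<forall>j<n. A$$(i,j) = A$$(j,i)"
  shows "\<exists>d u. num_nonpos_eigenvalues A = card {i. i < n \<and> d i \<le> 0}
    \<and> (\<forall>i<n. u i \<in> carrier_vec n)
    \<and> (\<forall>w\<in>carrier_vec n. w \<bullet> (A *\<^sub>v w) = (\<Sum>i\<in>{0..<n}. d i * (u i \<bullet> w)^2))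
    \<and> (\<forall>w\<in>carrier_vec n. (\<forall>i<n. u i \<bullet> w = 0) \<longrightarrow> w = 0\<^sub>v n)"
proof -
  obtain d u where eig: "\<forall>i<n. u i \<in> carrier_vec n \<and> A *\<^sub>v u i = d i \<cdot>\<^sub>v u i"
    and orth: "\<forall>i<n. \<forall>j<n. u i \<bullet> u j = (if i = j then 1 else 0)"
    using spectral[OF A sym] by blast
  define U where "U = mat n n (\<lambda>(i,j). u j $ i)"
  define D where "D = mat n n (\<lambda>(i,j). if i = j then d i else (0::real))"
  have U: "U \<in> carrier_mat n n" and D: "D \<in> carrier_mat n n" by (auto simp: U_def D_def)
  have colU: "col U j = u j" if "j < n" for j
    using eig that by (intro eq_vecI) (auto simp: U_def)
  have UtU: "transpose_mat U * U = 1\<^sub>m n"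
    by (intro eq_matI) (use U colU orth in auto)
  have UUt: "U * transpose_mat U = 1\<^sub>m n"
    using mat_mult_left_right_inverse[OF _ U UtU] U by simp
  have AU: "A * U = U * D"
  proof (intro eq_matI)
    fix i j assume "i < dim_row (U * D)" "j < dim_col (U * D)"
    hence i: "i < n" and j: "j < n" using U D by auto
    have "(A * U) $$ (i,j) = (A *\<^sub>v u j) $ i"
      using A U i j colU by simp
    also have "\<dots> = d j * u j $ i"
    proof -
      have "u j \<in> carrier_vec n" "A *\<^sub>v u j = d j \<cdot>\<^sub>v u j" using eig j by auto
      thus ?thesis using i by simp
    qed
    also have "\<dots> = (U * D) $$ (i,j)"
      using U D i j
      by (simp add: sp_idx[of _ n] U_def D_def if_distrib[where f="\<lambda>x. _ * x"] cong: if_cong)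
    finally show "(A * U) $$ (i,j) = (U * D) $$ (i,j)" .
  qed (use A U D in auto)
  have AUDU: "A = U * D * transpose_mat U"
  proof -
    have "A = A * (U * transpose_mat U)" using UUt A by simp
    also have "\<dots> = (A * U) * transpose_mat U" using A U by (simp add: assoc_mult_mat[of _ n n])
    finally show ?thesis unfolding AU .
  qed
  have "similar_mat_wit A D U (transpose_mat U)"
    unfolding similar_mat_wit_def Let_def using A D U UUt UtU AUDU by auto
  hence "char_poly A = char_poly D" by (intro char_poly_similar) (auto simp: similar_mat_def)
  also have "\<dots> = (\<Prod>a\<leftarrow>diag_mat D. [:- a, 1:])"
    by (rule char_poly_upper_triangular[OF D]) (auto simp: upper_triangular_def D_def)
  also have "diag_mat D = map d [0..<n]"
    by (auto simp: diag_mat_def D_def)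
  finally have "num_nonpos_eigenvalues A = length (filter (\<lambda>a. a \<le> 0) (map d [0..<n]))"
    by (rule num_nonpos_prod)
  also have "\<dots> = card {i. i < n \<and> d i \<le> 0}"
    by (simp add: length_filter_conv_card) (metis (lifting) add_0 diff_zero nth_map_upt)
  finally have num: "num_nonpos_eigenvalues A = card {i. i < n \<and> d i \<le> 0}" .
  have yi: "(transpose_mat U *\<^sub>v w) $ i = u i \<bullet> w" if "w \<in> carrier_vec n" "i < n" for w i
    using that U colU by simp
  have wU: "w = U *\<^sub>v (transpose_mat U *\<^sub>v w)" if w: "w \<in> carrier_vec n" for w
  proof -
    have "U *\<^sub>v (transpose_mat U *\<^sub>v w) = (U * transpose_mat U) *\<^sub>v w"
      using U w by (simp add: assoc_mult_mat_vec[of _ n n])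
    thus ?thesis using UUt w by simp
  qed
  have quad: "w \<bullet> (A *\<^sub>v w) = (\<Sum>i\<in>{0..<n}. d i * (u i \<bullet> w)^2)" if w: "w \<in> carrier_vec n" for w
  proof -
    define y where "y = transpose_mat U *\<^sub>v w"
    have y: "y \<in> carrier_vec n" using U w by (simp add: y_def)
    have "A *\<^sub>v w = A *\<^sub>v (U *\<^sub>v y)" using wU[OF w] by (simp add: y_def)
    also have "\<dots> = (A * U) *\<^sub>v y" using A U y by simp
    also have "\<dots> = U *\<^sub>v (D *\<^sub>v y)" unfolding AU using U D y by simp
    finally have Aw: "A *\<^sub>v w = U *\<^sub>v (D *\<^sub>v y)" .
    have "w \<bullet> (A *\<^sub>v w) = (U *\<^sub>v y) \<bullet> (U *\<^sub>v (D *\<^sub>v y))"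
      using wU[OF w] Aw by (simp add: y_def)
    also have "\<dots> = (transpose_mat U *\<^sub>v (U *\<^sub>v y)) \<bullet> (D *\<^sub>v y)"
      by (rule transpose_vec_mult_scalar[symmetric, OF U]) (use D y U in auto)
    also have "transpose_mat U *\<^sub>v (U *\<^sub>v y) = y"
      using U y UtU by (simp add: assoc_mult_mat_vec[symmetric, of _ n n])
    also have "y \<bullet> (D *\<^sub>v y) = (\<Sum>i\<in>{0..<n}. y $ i * (d i * y $ i))"
    proof -
      have Dy: "(D *\<^sub>v y) $ i = d i * y $ i" if i: "i < n" for i
      proof -
        have "(D *\<^sub>v y) $ i = (\<Sum>j\<in>{0..<n}. D $$ (i,j) * y $ j)" by (rule mv_idx[OF D y i])
        also have "\<dots> = (\<Sum>j\<in>{0..<n}. if j = i then d i * y $ j else 0)"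
          using i by (intro sum.cong) (auto simp: D_def)
        also have "\<dots> = d i * y $ i" using i by simp
        finally show ?thesis .
      qed
      have "y \<bullet> (D *\<^sub>v y) = (\<Sum>i\<in>{0..<n}. y $ i * (D *\<^sub>v y) $ i)"
        using D y by (simp add: sp_idx[of _ n])
      also have "\<dots> = (\<Sum>i\<in>{0..<n}. y $ i * (d i * y $ i))" using Dy by (intro sum.cong) auto
      finally show ?thesis .
    qed
    also have "\<dots> = (\<Sum>i\<in>{0..<n}. d i * (u i \<bullet> w)^2)"
      using yi[OF w] by (auto simp: y_def power2_eq_square intro!: sum.cong)
    finally show ?thesis .
  qed
  have zero: "w = 0\<^sub>v n" if w: "w \<in> carrier_vec n" and z: "\<forall>i<n. u i \<bullet> w = 0" for w
  proof -
    have "transpose_mat U *\<^sub>v w = 0\<^sub>v n"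
      using yi[OF w] z U by (intro eq_vecI) auto
    moreover have "U *\<^sub>v 0\<^sub>v n = 0\<^sub>v n"
      using U by (intro eq_vecI) (auto simp: scalar_prod_def)
    ultimately show ?thesis using wU[OF w] by simp
  qed
  show ?thesis using num eig quad zero by blast
qed


lemma kill2:
  fixes p1 p2 p3 q1 q2 q3 :: real
  shows "\<exists>c1 c2 c3. \<not> (c1 = 0 \<and> c2 = 0 \<and> c3 = 0) \<and> c1 * p1 + c2 * p2 + c3 * p3 = 0
     \<and> c1 * q1 + c2 * q2 + c3 * q3 = 0"
proof -
  define r1 where "r1 = p2 * q3 - p3 * q2"
  define r2 where "r2 = p3 * q1 - p1 * q3"
  define r3 where "r3 = p1 * q2 - p2 * q1"
  show ?thesis
  proof (cases "r1 = 0 \<and> r2 = 0 \<and> r3 = 0")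
    case False
    show ?thesis
      by (rule exI[of _ r1], rule exI[of _ r2], rule exI[of _ r3])
        (use False in \<open>auto simp: r1_def r2_def r3_def algebra_simps\<close>)
  next
    case True
    show ?thesis
    proof (cases "p1 = 0 \<and> p2 = 0 \<and> p3 = 0")
      case pz: True
      show ?thesis
      proof (cases "q1 = 0 \<and> q2 = 0 \<and> q3 = 0")
        case True
        thus ?thesis using pz by (intro exI[of _ 1] exI[of _ 0]) auto
      next
        case False
        hence "(q2 \<noteq> 0 \<or> q1 \<noteq> 0) \<or> (q3 \<noteq> 0)" by auto
        thus ?thesis
        proof
          assume "q2 \<noteq> 0 \<or> q1 \<noteq> 0"
          thus ?thesis using pz
            by (intro exI[of _ q2] exI[of _ "-q1"] exI[of _ 0]) (auto simp: algebra_simps)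
        next
          assume "q3 \<noteq> 0"
          thus ?thesis using pz
            by (intro exI[of _ q3] exI[of _ 0] exI[of _ "-q1"]) (auto simp: algebra_simps)
        qed
      qed
    next
      case False
      hence "(p2 \<noteq> 0 \<or> p1 \<noteq> 0) \<or> (p3 \<noteq> 0)" by auto
      thus ?thesis
      proof
        assume "p2 \<noteq> 0 \<or> p1 \<noteq> 0"
        thus ?thesis using True
          by (intro exI[of _ p2] exI[of _ "-p1"] exI[of _ 0]) (auto simp: r3_def algebra_simps)
      next
        assume "p3 \<noteq> 0"
        thus ?thesis using True
          by (intro exI[of _ p3] exI[of _ 0] exI[of _ "-p1"]) (auto simp: r2_def algebra_simps)
      qed
    qed
  qed
qed

lemma card_le2:
  assumes "finite C" "card C \<le> 2"
  shows "\<exists>i j. C \<subseteq> {i, j}"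
proof -
  consider "card C = 0" | "card C = 1" | "card C = 2" using assms(2) by linarith
  thus ?thesis
  proof cases
    case 1 thus ?thesis using assms(1) by auto
  next
    case 2 thus ?thesis by (auto simp: card_1_singleton_iff)
  next
    case 3 thus ?thesis by (auto simp: card_2_iff)
  qed
qed

lemma key_core:
  fixes A :: "real mat"
  assumes A: "A \<in> carrier_mat n n" and sym: "\<forall>i<n. \<forall>j<n. A$$(i,j) = A$$(j,i)"
    and F: "F1 \<in> carrier_vec n" "F2 \<in> carrier_vec n" "F3 \<in> carrier_vec n"
    and inj: "\<And>c1 c2 c3. c1 \<cdot>\<^sub>v F1 + c2 \<cdot>\<^sub>v F2 + c3 \<cdot>\<^sub>v F3 = 0\<^sub>v n \<Longrightarrow> c1 = 0 \<and> c2 = 0 \<and> c3 = 0"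
  shows "((\<forall>c1 c2 c3. (c1 \<cdot>\<^sub>v F1 + c2 \<cdot>\<^sub>v F2 + c3 \<cdot>\<^sub>v F3) \<bullet> (A *\<^sub>v (c1 \<cdot>\<^sub>v F1 + c2 \<cdot>\<^sub>v F2 + c3 \<cdot>\<^sub>v F3)) \<le> 0)
       \<longrightarrow> 3 \<le> num_nonpos_eigenvalues A)
    \<and> ((\<forall>c1 c2 c3. \<not> (c1 = 0 \<and> c2 = 0 \<and> c3 = 0) \<longrightarrow>
         (c1 \<cdot>\<^sub>v F1 + c2 \<cdot>\<^sub>v F2 + c3 \<cdot>\<^sub>v F3) \<bullet> (A *\<^sub>v (c1 \<cdot>\<^sub>v F1 + c2 \<cdot>\<^sub>v F2 + c3 \<cdot>\<^sub>v F3)) > 0)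
       \<longrightarrow> num_nonpos_eigenvalues A + 3 \<le> n)"
proof -
  obtain d u where num: "num_nonpos_eigenvalues A = card {i. i < n \<and> d i \<le> 0}"
    and uc: "\<forall>i<n. u i \<in> carrier_vec n"
    and quad: "\<forall>w\<in>carrier_vec n. w \<bullet> (A *\<^sub>v w) = (\<Sum>i\<in>{0..<n}. d i * (u i \<bullet> w)^2)"
    and zero: "\<forall>w\<in>carrier_vec n. (\<forall>i<n. u i \<bullet> w = 0) \<longrightarrow> w = 0\<^sub>v n"
    using spec_facts[OF A sym] by blast
  define W where "W = (\<lambda>c1 c2 c3. c1 \<cdot>\<^sub>v F1 + c2 \<cdot>\<^sub>v F2 + c3 \<cdot>\<^sub>v F3)"
  have Wc: "W c1 c2 c3 \<in> carrier_vec n" for c1 c2 c3 using F by (simp add: W_def)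
  have uW: "u i \<bullet> W c1 c2 c3 = c1 * (u i \<bullet> F1) + c2 * (u i \<bullet> F2) + c3 * (u i \<bullet> F3)"
    if "i < n" for i c1 c2 c3
    using F uc that by (simp add: W_def scalar_prod_add_distrib[of _ n])
  have main: "\<exists>c1 c2 c3. W c1 c2 c3 \<noteq> 0\<^sub>v n \<and> (\<forall>i\<in>C. u i \<bullet> W c1 c2 c3 = 0)"
    if C: "C \<subseteq> {0..<n}" "card C \<le> 2" for C
  proof -
    have "finite C" using C finite_subset by blast
    then obtain i j where ij: "C \<subseteq> {i, j}" using card_le2 C by blast
    obtain c1 c2 c3 where c: "\<not> (c1 = 0 \<and> c2 = 0 \<and> c3 = 0)"
      "c1 * (u i \<bullet> F1) + c2 * (u i \<bullet> F2) + c3 * (u i \<bullet> F3) = 0"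
      "c1 * (u j \<bullet> F1) + c2 * (u j \<bullet> F2) + c3 * (u j \<bullet> F3) = 0"
      using kill2 by blast
    have "W c1 c2 c3 \<noteq> 0\<^sub>v n" using inj c(1) by (auto simp: W_def)
    moreover have "\<forall>k\<in>C. u k \<bullet> W c1 c2 c3 = 0"
    proof
      fix k assume k: "k \<in> C"
      hence kn: "k < n" using C by auto
      from k ij have "k = i \<or> k = j" by auto
      thus "u k \<bullet> W c1 c2 c3 = 0" using uW[OF kn] c by auto
    qed
    ultimately show ?thesis by blast
  qed
  have part: "card {i. i < n \<and> P (d i)} \<ge> 3"
    if contra: "\<And>c1 c2 c3. W c1 c2 c3 \<noteq> 0\<^sub>v n \<Longrightarrow> (\<forall>i<n. P (d i) \<longrightarrow> u i \<bullet> W c1 c2 c3 = 0) \<Longrightarrow> False" for P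
  proof (rule ccontr)
    assume "\<not> ?thesis"
    hence "card {i. i < n \<and> P (d i)} \<le> 2" by simp
    then obtain c1 c2 c3 where "W c1 c2 c3 \<noteq> 0\<^sub>v n" "\<forall>i\<in>{i. i < n \<and> P (d i)}. u i \<bullet> W c1 c2 c3 = 0"
      using main[of "{i. i < n \<and> P (d i)}"] by (auto simp: subset_iff)
    thus False using contra by blast
  qed
  have exnz: "\<exists>k<n. u k \<bullet> w \<noteq> 0" if "w \<in> carrier_vec n" "w \<noteq> 0\<^sub>v n" for w
    using zero that by blast
  have injW: "\<not> (c1 = 0 \<and> c2 = 0 \<and> c3 = 0)" if "W c1 c2 c3 \<noteq> 0\<^sub>v n" for c1 c2 c3
    using that F by (auto simp: W_def)
  show ?thesis
  proof (intro conjI impI)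
    assume neg: "\<forall>c1 c2 c3. (c1 \<cdot>\<^sub>v F1 + c2 \<cdot>\<^sub>v F2 + c3 \<cdot>\<^sub>v F3) \<bullet> (A *\<^sub>v (c1 \<cdot>\<^sub>v F1 + c2 \<cdot>\<^sub>v F2 + c3 \<cdot>\<^sub>v F3)) \<le> 0"
    have "card {i. i < n \<and> d i \<le> 0} \<ge> 3"
    proof (rule part)
      fix c1 c2 c3 assume w0: "W c1 c2 c3 \<noteq> 0\<^sub>v n" and z: "\<forall>i<n. d i \<le> 0 \<longrightarrow> u i \<bullet> W c1 c2 c3 = 0"
      define w where "w = W c1 c2 c3"
      have w: "w \<in> carrier_vec n" "w \<noteq> 0\<^sub>v n" using Wc w0 by (auto simp: w_def)
      obtain k where k: "k < n" "u k \<bullet> w \<noteq> 0" using exnz[OF w] by blast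
      have dk: "d k > 0" using z k by (force simp: w_def)
      have "0 < (\<Sum>i\<in>{0..<n}. d i * (u i \<bullet> w)^2)"
      proof (rule sum_pos2[of _ k])
        show "0 < d k * (u k \<bullet> w)^2" using dk k by simp
        fix i assume "i \<in> {0..<n}"
        thus "0 \<le> d i * (u i \<bullet> w)^2" using z
          by (cases "d i \<le> 0") (auto simp: w_def)
      qed (use k in auto)
      hence "w \<bullet> (A *\<^sub>v w) > 0" using quad w by simp
      thus False using neg by (auto simp: w_def W_def not_le[symmetric])
    qed
    thus "3 \<le> num_nonpos_eigenvalues A" using num by simp
  next
    assume pos: "\<forall>c1 c2 c3. \<not> (c1 = 0 \<and> c2 = 0 \<and> c3 = 0) \<longrightarrow>
         (c1 \<cdot>\<^sub>v F1 + c2 \<cdot>\<^sub>v F2 + c3 \<cdot>\<^sub>v F3) \<bullet> (A *\<^sub>v (c1 \<cdot>\<^sub>v F1 + c2 \<cdot>\<^sub>v F2 + c3 \<cdot>\<^sub>v F3)) > 0"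
    have "card {i. i < n \<and> \<not> d i \<le> 0} \<ge> 3"
    proof (rule part)
      fix c1 c2 c3 assume w0: "W c1 c2 c3 \<noteq> 0\<^sub>v n" and z: "\<forall>i<n. \<not> d i \<le> 0 \<longrightarrow> u i \<bullet> W c1 c2 c3 = 0"
      define w where "w = W c1 c2 c3"
      have w: "w \<in> carrier_vec n" "w \<noteq> 0\<^sub>v n" using Wc w0 by (auto simp: w_def)
      have "(\<Sum>i\<in>{0..<n}. d i * (u i \<bullet> w)^2) \<le> 0"
      proof (rule sum_nonpos)
        fix i assume "i \<in> {0..<n}"
        thus "d i * (u i \<bullet> w)^2 \<le> 0" using z
          by (cases "d i \<le> 0") (auto simp: w_def mult_nonpos_nonneg)
      qed
      hence "w \<bullet> (A *\<^sub>v w) \<le> 0" using quad w by simp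
      moreover have "w \<bullet> (A *\<^sub>v w) > 0" using pos injW[OF w0] by (auto simp: w_def W_def)
      ultimately show False by simp
    qed
    moreover have "card {i. i < n \<and> d i \<le> 0} + card {i. i < n \<and> \<not> d i \<le> 0} = n"
    proof -
      have "card {i. i < n \<and> d i \<le> 0} + card {i. i < n \<and> \<not> d i \<le> 0}
          = card ({i. i < n \<and> d i \<le> 0} \<union> {i. i < n \<and> \<not> d i \<le> 0})"
        by (rule card_Un_disjoint[symmetric]) auto
      also have "{i. i < n \<and> d i \<le> 0} \<union> {i. i < n \<and> \<not> d i \<le> 0} = {..<n}" by auto
      finally show ?thesis by simp
    qed
    ultimately show "num_nonpos_eigenvalues A + 3 \<le> n" using num by simp
  qed
qed


definition ind :: "bool \<Rightarrow> real" where "ind b = (if b then 1 else 0)"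

lemma adj_carrier: "adj_matrix m E \<in> carrier_mat m m"
  by (simp add: adj_matrix_def)

lemma adj_sym: "simple_graph m E \<Longrightarrow> \<forall>i<m. \<forall>j<m. adj_matrix m E $$ (i,j) = adj_matrix m E $$ (j,i)"
  by (auto simp: adj_matrix_def simple_graph_def)

lemma quad_adj:
  "vec m g \<bullet> (adj_matrix m E *\<^sub>v vec m g) = (\<Sum>i\<in>{0..<m}. \<Sum>j\<in>{0..<m}. ind (E i j) * g i * g j)"
proof -
  have "vec m g \<bullet> (adj_matrix m E *\<^sub>v vec m g) = (\<Sum>i\<in>{0..<m}. g i * (\<Sum>j\<in>{0..<m}. adj_matrix m E $$ (i,j) * g j))"
  proof -
    have "vec m g \<bullet> (adj_matrix m E *\<^sub>v vec m g) = (\<Sum>i\<in>{0..<m}. vec m g $ i * (adj_matrix m E *\<^sub>v vec m g) $ i)"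
      by (rule sp_idx, rule mult_mat_vec_carrier[OF adj_carrier]) simp
    also have "\<dots> = (\<Sum>i\<in>{0..<m}. g i * (\<Sum>j\<in>{0..<m}. adj_matrix m E $$ (i,j) * g j))"
      by (intro sum.cong refl) (auto simp: mv_idx[OF adj_carrier] intro!: sum.cong)
    finally show ?thesis .
  qed
  also have "\<dots> = (\<Sum>i\<in>{0..<m}. \<Sum>j\<in>{0..<m}. ind (E i j) * g i * g j)"
    by (auto simp: sum_distrib_left adj_matrix_def ind_def intro!: sum.cong)
  finally show ?thesis .
qed

lemma quad_supp:
  assumes S: "S \<subseteq> {0..<m}" and g: "\<forall>k. k \<notin> S \<longrightarrow> g k = 0"
  shows "(\<Sum>i\<in>{0..<m}. \<Sum>j\<in>{0..<m}. h i j * g i * g (j::nat)) = (\<Sum>i\<in>S. \<Sum>j\<in>S. h i j * g i * (g j :: real))"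
proof -
  have fin: "finite S" using S finite_subset by blast
  have "(\<Sum>i\<in>{0..<m}. \<Sum>j\<in>{0..<m}. h i j * g i * g j) = (\<Sum>i\<in>{0..<m}. \<Sum>j\<in>S. h i j * g i * g j)"
  proof (rule sum.cong[OF refl])
    fix i assume "i \<in> {0..<m}"
    show "(\<Sum>j\<in>{0..<m}. h i j * g i * g j) = (\<Sum>j\<in>S. h i j * g i * g j)"
      by (rule sum.mono_neutral_right) (use S g in auto)
  qed
  also have "\<dots> = (\<Sum>i\<in>S. \<Sum>j\<in>S. h i j * g i * g j)"
    by (rule sum.mono_neutral_right) (use S g fin in auto)
  finally show ?thesis .
qed

lemma Q4:
  assumes sg: "simple_graph m E" and lt: "a < m" "b < m" "c < m" "d < m"
    and dist: "a \<noteq> b" "a \<noteq> c" "a \<noteq> d" "b \<noteq> c" "b \<noteq> d" "c \<noteq> d"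
    and g: "\<forall>k. k \<notin> {a,b,c,d} \<longrightarrow> g k = 0"
  shows "vec m g \<bullet> (adj_matrix m E *\<^sub>v vec m g) = 2 * (ind (E a b) * g a * g b + ind (E a c) * g a * g c
     + ind (E a d) * g a * g d + ind (E b c) * g b * g c + ind (E b d) * g b * g d + ind (E c d) * g c * g d)"
proof -
  have irr: "\<not> E a a" "\<not> E b b" "\<not> E c c" "\<not> E d d" using sg lt by (auto simp: simple_graph_def)
  have sy: "E b a = E a b" "E c a = E a c" "E d a = E a d" "E c b = E b c" "E d b = E b d" "E d c = E c d"
    using sg lt by (auto simp: simple_graph_def)
  have "vec m g \<bullet> (adj_matrix m E *\<^sub>v vec m g) = (\<Sum>i\<in>{a,b,c,d}. \<Sum>j\<in>{a,b,c,d}. ind (E i j) * g i * g j)"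
    unfolding quad_adj by (rule quad_supp) (use lt g in auto)
  also have "\<dots> = 2 * (ind (E a b) * g a * g b + ind (E a c) * g a * g c
     + ind (E a d) * g a * g d + ind (E b c) * g b * g c + ind (E b d) * g b * g d + ind (E c d) * g c * g d)"
    using dist by (simp add: irr sy ind_def algebra_simps)
  finally show ?thesis .
qed


lemma lincomb: "c1 \<cdot>\<^sub>v vec m f1 + c2 \<cdot>\<^sub>v vec m f2 + c3 \<cdot>\<^sub>v vec m f3 = vec m (\<lambda>k. c1 * f1 k + c2 * f2 k + c3 * f3 k)"
  by (intro eq_vecI) auto

lemma tmpl_nonpos:
  assumes sg: "simple_graph m E"
    and inj: "\<And>c1 c2 c3. (\<forall>k<m. c1 * f1 k + c2 * f2 k + c3 * f3 k = 0) \<Longrightarrow> c1 = 0 \<and> c2 = 0 \<and> c3 = 0"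
    and neg: "\<And>c1 c2 c3. vec m (\<lambda>k. c1 * f1 k + c2 * f2 k + c3 * f3 k) \<bullet>
        (adj_matrix m E *\<^sub>v vec m (\<lambda>k. c1 * f1 k + c2 * f2 k + c3 * f3 k)) \<le> 0"
  shows "3 \<le> num_nonpos_eigenvalues (adj_matrix m E)"
proof -
  have inj': "c1 = 0 \<and> c2 = 0 \<and> c3 = 0" if "c1 \<cdot>\<^sub>v vec m f1 + c2 \<cdot>\<^sub>v vec m f2 + c3 \<cdot>\<^sub>v vec m f3 = 0\<^sub>v m" for c1 c2 c3
  proof (rule inj, intro allI impI)
    fix k assume k: "k < m"
    have "vec m (\<lambda>k. c1 * f1 k + c2 * f2 k + c3 * f3 k) $ k = 0\<^sub>v m $ k"
      using that unfolding lincomb by simp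
    thus "c1 * f1 k + c2 * f2 k + c3 * f3 k = 0" using k by simp
  qed
  show ?thesis
    using key_core[OF adj_carrier adj_sym[OF sg], of "vec m f1" "vec m f2" "vec m f3"] inj' neg
    unfolding lincomb by auto
qed

definition dl :: "nat \<Rightarrow> nat \<Rightarrow> real" where "dl a k = (if k = a then 1 else 0)"

lemma tmpl1:
  assumes sg: "simple_graph m E" and lt: "a < m" "b < m" "c < m" "d < m"
    and dist: "a \<noteq> b" "a \<noteq> c" "a \<noteq> d" "b \<noteq> c" "b \<noteq> d" "c \<noteq> d"
    and T: "\<not> E a b" "\<not> E a c" "\<not> E b c"
  shows "3 \<le> num_nonpos_eigenvalues (adj_matrix m E)"
proof (rule tmpl_nonpos[OF sg, of "dl a" "dl b" "dl c"])
  fix c1 c2 c3 assume "\<forall>k<m. c1 * dl a k + c2 * dl b k + c3 * dl c k = 0"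
  hence "c1 * dl a a + c2 * dl b a + c3 * dl c a = 0" "c1 * dl a b + c2 * dl b b + c3 * dl c b = 0"
    "c1 * dl a c + c2 * dl b c + c3 * dl c c = 0" using lt by auto
  thus "c1 = 0 \<and> c2 = 0 \<and> c3 = 0" using dist by (auto simp: dl_def)
next
  fix c1 c2 c3
  let ?g = "\<lambda>k. c1 * dl a k + c2 * dl b k + c3 * dl c k"
  have "vec m ?g \<bullet> (adj_matrix m E *\<^sub>v vec m ?g) = 2 * (ind (E a b) * ?g a * ?g b + ind (E a c) * ?g a * ?g c
     + ind (E a d) * ?g a * ?g d + ind (E b c) * ?g b * ?g c + ind (E b d) * ?g b * ?g d + ind (E c d) * ?g c * ?g d)"
    by (rule Q4[OF sg lt dist]) (auto simp: dl_def)
  also have "\<dots> = 0" using T dist by (simp add: ind_def dl_def)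
  finally show "vec m ?g \<bullet> (adj_matrix m E *\<^sub>v vec m ?g) \<le> 0" by simp
qed

lemma tmpl2:
  assumes sg: "simple_graph m E" and lt: "a < m" "b < m" "c < m" "d < m"
    and dist: "a \<noteq> b" "a \<noteq> c" "a \<noteq> d" "b \<noteq> c" "b \<noteq> d" "c \<noteq> d"
    and T: "E a b" "E b c" "E c d" "E a d"
  shows "3 \<le> num_nonpos_eigenvalues (adj_matrix m E)"
proof (rule tmpl_nonpos[OF sg, of "\<lambda>k. dl a k - dl d k" "\<lambda>k. dl b k - dl d k" "\<lambda>k. dl c k - dl d k"])
  fix c1 c2 c3 assume h: "\<forall>k<m. c1 * (dl a k - dl d k) + c2 * (dl b k - dl d k) + c3 * (dl c k - dl d k) = 0"
  have "c1 = 0" using h[rule_format, OF lt(1)] dist by (simp add: dl_def)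
  moreover have "c2 = 0" using h[rule_format, OF lt(2)] dist by (simp add: dl_def)
  moreover have "c3 = 0" using h[rule_format, OF lt(3)] dist by (simp add: dl_def)
  ultimately show "c1 = 0 \<and> c2 = 0 \<and> c3 = 0" by simp
next
  fix c1 c2 c3
  let ?g = "\<lambda>k. c1 * (dl a k - dl d k) + c2 * (dl b k - dl d k) + c3 * (dl c k - dl d k)"
  have ga: "?g a = c1" and gb: "?g b = c2" and gc: "?g c = c3" and gd: "?g d = - (c1 + c2 + c3)"
    using dist by (auto simp: dl_def)
  have "vec m ?g \<bullet> (adj_matrix m E *\<^sub>v vec m ?g) = 2 * (ind (E a b) * ?g a * ?g b + ind (E a c) * ?g a * ?g c
     + ind (E a d) * ?g a * ?g d + ind (E b c) * ?g b * ?g c + ind (E b d) * ?g b * ?g d + ind (E c d) * ?g c * ?g d)"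
    by (rule Q4[OF sg lt dist]) (auto simp: dl_def)
  also have "\<dots> = (- ((c1 + c3)^2) + 2 * ind (E a c) * c1 * c3) + (- ((c1 + c3)^2) + 2 * ind (E b d) * c2 * (- (c1 + c2 + c3)))"
    unfolding ga gb gc gd using T by (simp add: ind_def power2_eq_square algebra_simps)
  also have "\<dots> \<le> 0"
  proof -
    have X: "- ((c1 + c3)^2) + 2 * ind (E a c) * c1 * c3 \<le> 0"
    proof (cases "E a c")
      case True
      have "- ((c1 + c3)^2) + 2 * c1 * c3 = - (c1^2 + c3^2)" by (simp add: power2_eq_square algebra_simps)
      thus ?thesis using True by (simp add: ind_def)
    qed (simp add: ind_def)
    have Y: "- ((c1 + c3)^2) + 2 * ind (E b d) * c2 * (- (c1 + c2 + c3)) \<le> 0"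
    proof (cases "E b d")
      case True
      have "- ((c1 + c3)^2) + 2 * c2 * (- (c1 + c2 + c3)) = - (c2^2 + (c1 + c2 + c3)^2)"
        by (simp add: power2_eq_square algebra_simps)
      thus ?thesis using True by (simp add: ind_def)
    qed (simp add: ind_def)
    show ?thesis using X Y by simp
  qed
  finally show "vec m ?g \<bullet> (adj_matrix m E *\<^sub>v vec m ?g) \<le> 0" .
qed

lemma tmpl3:
  assumes sg: "simple_graph m E" and lt: "a < m" "b < m" "c < m" "d < m"
    and dist: "a \<noteq> b" "a \<noteq> c" "a \<noteq> d" "b \<noteq> c" "b \<noteq> d" "c \<noteq> d"
    and T: "E a b" "E a c" "E b c" "\<not> E a d" "\<not> E b d" "\<not> E c d"
  shows "3 \<le> num_nonpos_eigenvalues (adj_matrix m E)"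
proof (rule tmpl_nonpos[OF sg, of "\<lambda>k. dl a k - dl c k" "\<lambda>k. dl b k - dl c k" "dl d"])
  fix c1 c2 c3 assume h: "\<forall>k<m. c1 * (dl a k - dl c k) + c2 * (dl b k - dl c k) + c3 * dl d k = 0"
  have "c1 = 0" using h[rule_format, OF lt(1)] dist by (simp add: dl_def)
  moreover have "c2 = 0" using h[rule_format, OF lt(2)] dist by (simp add: dl_def)
  moreover have "c3 = 0" using h[rule_format, OF lt(4)] dist by (simp add: dl_def)
  ultimately show "c1 = 0 \<and> c2 = 0 \<and> c3 = 0" by simp
next
  fix c1 c2 c3
  let ?g = "\<lambda>k. c1 * (dl a k - dl c k) + c2 * (dl b k - dl c k) + c3 * dl d k"
  have ga: "?g a = c1" and gb: "?g b = c2" and gc: "?g c = - (c1 + c2)" and gd: "?g d = c3"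
    using dist by (auto simp: dl_def)
  have "vec m ?g \<bullet> (adj_matrix m E *\<^sub>v vec m ?g) = 2 * (ind (E a b) * ?g a * ?g b + ind (E a c) * ?g a * ?g c
     + ind (E a d) * ?g a * ?g d + ind (E b c) * ?g b * ?g c + ind (E b d) * ?g b * ?g d + ind (E c d) * ?g c * ?g d)"
    by (rule Q4[OF sg lt dist]) (auto simp: dl_def)
  also have "\<dots> = - (c1^2 + c2^2 + (c1 + c2)^2)"
    unfolding ga gb gc gd using T by (simp add: ind_def power2_eq_square algebra_simps)
  also have "\<dots> \<le> 0" by (smt (verit) zero_le_power2)
  finally show "vec m ?g \<bullet> (adj_matrix m E *\<^sub>v vec m ?g) \<le> 0" .
qed


definition good :: "(nat \<Rightarrow> nat \<Rightarrow> bool) \<Rightarrow> nat \<Rightarrow> nat \<Rightarrow> nat \<Rightarrow> nat \<Rightarrow> bool" where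
  "good E a b c d \<longleftrightarrow> a < 6 \<and> b < 6 \<and> c < 6 \<and> d < 6 \<and> a \<noteq> b \<and> a \<noteq> c \<and> a \<noteq> d \<and> b \<noteq> c \<and> b \<noteq> d \<and> c \<noteq> d \<and>
    ((\<not> E (min a b) (max a b) \<and> \<not> E (min a c) (max a c) \<and> \<not> E (min b c) (max b c))
    \<or> (E (min a b) (max a b) \<and> E (min b c) (max b c) \<and> E (min c d) (max c d) \<and> E (min a d) (max a d))
    \<or> (E (min a b) (max a b) \<and> E (min a c) (max a c) \<and> E (min b c) (max b c) \<and> \<not> E (min a d) (max a d)
       \<and> \<not> E (min b d) (max b d) \<and> \<not> E (min c d) (max c d)))"

lemma comb6: "good E 0 1 2 3 \<or> good E 0 1 2 4 \<or> good E 0 1 2 5 \<or> good E 0 1 3 2 \<or> good E 0 1 3 4 \<or> good E 0 1 3 5 \<or> good E 0 1 4 2 \<or> good E 0 1 4 3 \<or> good E 0 1 4 5 \<or> good E 0 1 5 2 \<or> good E 0 1 5 3 \<or> good E 0 1 5 4 \<or> good E 0 2 1 3 \<or> good E 0 2 1 4 \<or> good E 0 2 1 5 \<or> good E 0 2 3 1 \<or> good E 0 2 3 4 \<or> good E 0 2 3 5 \<or> good E 0 2 4 1 \<or> good E 0 2 4 3 \<or> good E 0 2 4 5 \<or> good E 0 2 5 1 \<or> good E 0 2 5 3 \<or> good E 0 2 5 4 \<or> good E 0 3 1 4 \<or> good E 0 3 1 5 \<or> good E 0 3 2 4 \<or> good E 0 3 2 5 \<or> good E 0 3 4 1 \<or>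 good E 0 3 4 2 \<or> good E 0 3 4 5 \<or> good E 0 3 5 1 \<or> good E 0 3 5 2 \<or> good E 0 3 5 4 \<or> good E 0 4 1 5 \<or> good E 0 4 2 5 \<or> good E 0 4 3 5 \<or> good E 0 4 5 1 \<or> good E 0 4 5 2 \<or> good E 0 4 5 3 \<or> good E 1 2 3 0 \<or> good E 1 2 3 4 \<or> good E 1 2 3 5 \<or> good E 1 2 4 0 \<or> good E 1 2 4 3 \<or> good E 1 2 4 5 \<or> good E 1 2 5 0 \<or> good E 1 2 5 3 \<or> good E 1 2 5 4 \<or> good E 1 3 2 4 \<or> good E 1 3 2 5 \<or> good E 1 3 4 0 \<or> good E 1 3 4 2 \<or> good E 1 3 4 5 \<or> good E 1 3 5 0 \<or> good E 1 3 5 2 \<or> good E 1 3 5 4 \<or> good E 1 4 2 5 \<or> good E 1 4 3 5 \<or> good E 1 4 5 0 \<or> good E 1 4 5 2 \<or> good E 1 4 5 3 \<or> good E 2 3 4 0 \<or> good E 2 3 4 1 \<or> good E 2 3 4 5 \<or> good E 2 3 5 0 \<or> good E 2 3 5 1 \<or> good E 2 3 5 4 \<or> good E 2 4 3 5 \<or> good E 2 4 5 0 \<or> good E 2 4 5 1 \<or> good E 2 4 5 3 \<or> good E 3 4 5 0 \<or> good E 3 4 5 1 \<or> good E 3 4 5 2"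
  unfolding good_def by simp sat

lemma comb6_ex: "\<exists>a b c d. good E a b c d"
  using comb6[of E] by blast

lemma minmax_sym: "simple_graph m E \<Longrightarrow> x < m \<Longrightarrow> y < m \<Longrightarrow> E (min x y) (max x y) = E x y"
  by (cases "x \<le> y") (auto simp: simple_graph_def min_def max_def)

lemma six:
  assumes sg: "simple_graph m E" and m: "6 \<le> m"
  shows "3 \<le> num_nonpos_eigenvalues (adj_matrix m E)"
proof -
  obtain a b c d where g: "good E a b c d" using comb6_ex by blast
  hence lt: "a < m" "b < m" "c < m" "d < m"
    and dist: "a \<noteq> b" "a \<noteq> c" "a \<noteq> d" "b \<noteq> c" "b \<noteq> d" "c \<noteq> d"
    using m by (auto simp: good_def)
  note mm = minmax_sym[OF sg]
  from g have
    "(\<not> E a b \<and> \<not> E a c \<and> \<not> E b c) \<or> (E a b \<and> E b c \<and> E c d \<and> E a d)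
     \<or> (E a b \<and> E a c \<and> E b c \<and> \<not> E a d \<and> \<not> E b d \<and> \<not> E c d)"
    unfolding good_def using lt by (simp add: mm)
  thus ?thesis
    using tmpl1[OF sg lt dist] tmpl2[OF sg lt dist] tmpl3[OF sg lt dist] by blast
qed

definition E5 :: "nat \<Rightarrow> nat \<Rightarrow> bool" where
  "E5 i j \<longleftrightarrow> (i, j) \<in> {(0,1),(1,2),(2,3),(3,4),(4,0),(1,0),(2,1),(3,2),(4,3),(0,4)}"

lemma E5_sg: "simple_graph 5 E5"
  by (auto simp: simple_graph_def E5_def)

lemma sum5: "(\<Sum>i\<in>{0..<5::nat}. f i) = f 0 + f 1 + f 2 + f 3 + (f 4 :: real)"
  by (simp add: numeral_eq_Suc sum_shift)

lemma C5_count: "num_nonpos_eigenvalues (adj_matrix 5 E5) + 3 \<le> 5"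
proof -
  define f1 where "f1 = (\<lambda>k::nat. if k = 1 \<or> k = 2 then 1 else (0::real))"
  define f2 where "f2 = (\<lambda>k::nat. if k = 0 \<or> k = 4 then 1 else (0::real))"
  define f3 where "f3 = (\<lambda>k::nat. if k = 0 \<or> k = 1 then 1 else if k = 3 then -1 else (0::real))"
  have Q: "vec 5 (\<lambda>k. c1 * f1 k + c2 * f2 k + c3 * f3 k) \<bullet> (adj_matrix 5 E5 *\<^sub>v vec 5 (\<lambda>k. c1 * f1 k + c2 * f2 k + c3 * f3 k))
     = (c1 + c2)^2 + (c1 + c3)^2 + (c2 + c3)^2" for c1 c2 c3
    unfolding quad_adj sum5 by (simp add: E5_def ind_def f1_def f2_def f3_def power2_eq_square algebra_simps)
  have pos: "(c1 + c2)^2 + (c1 + c3)^2 + (c2 + c3)^2 > (0::real)" if "\<not> (c1 = 0 \<and> c2 = 0 \<and> c3 = 0)" for c1 c2 c3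
  proof (rule ccontr)
    assume "\<not> ?thesis"
    hence "(c1 + c2)^2 = 0" "(c1 + c3)^2 = 0" "(c2 + c3)^2 = 0"
      using zero_le_power2[of "c1+c2"] zero_le_power2[of "c1+c3"] zero_le_power2[of "c2+c3"] by linarith+
    hence "c1 + c2 = 0" "c1 + c3 = 0" "c2 + c3 = 0" by simp_all
    thus False using that by simp
  qed
  have inj: "c1 = 0 \<and> c2 = 0 \<and> c3 = 0" if h: "c1 \<cdot>\<^sub>v vec 5 f1 + c2 \<cdot>\<^sub>v vec 5 f2 + c3 \<cdot>\<^sub>v vec 5 f3 = 0\<^sub>v 5" for c1 c2 c3
  proof (rule ccontr)
    assume "\<not> ?thesis"
    hence "0 < vec 5 (\<lambda>k. c1 * f1 k + c2 * f2 k + c3 * f3 k) \<bullet> (adj_matrix 5 E5 *\<^sub>v vec 5 (\<lambda>k. c1 * f1 k + c2 * f2 k + c3 * f3 k))"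
      using Q pos by simp
    moreover have "vec 5 (\<lambda>k. c1 * f1 k + c2 * f2 k + c3 * f3 k) = 0\<^sub>v 5" using h unfolding lincomb .
    ultimately show False by (simp add: scalar_prod_def)
  qed
  show ?thesis
    using key_core[OF adj_carrier adj_sym[OF E5_sg], of "vec 5 f1" "vec 5 f2" "vec 5 f3"] inj Q pos
    unfolding lincomb by auto
qed

theorem mainTheorem6:
  shows "NPO 3 = 6"
  unfolding NPO_def
proof (rule Least_equality)
  show "\<forall>m\<ge>6. \<forall>E. simple_graph m E \<longrightarrow> 3 \<le> num_nonpos_eigenvalues (adj_matrix m E)"
    using six by blast
next
  fix y assume h: "\<forall>m\<ge>y. \<forall>E. simple_graph m E \<longrightarrow> 3 \<le> num_nonpos_eigenvalues (adj_matrix m E)"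
  show "6 \<le> y"
  proof (rule ccontr)
    assume "\<not> 6 \<le> y"
    hence "5 \<ge> y" by simp
    hence "3 \<le> num_nonpos_eigenvalues (adj_matrix 5 E5)" using h E5_sg by blast
    thus False using C5_count by simp
  qed
qed

end
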